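(* Every simply typable term of $\Lambda J$ (i.e. every $t\in\mathtt T_J$ such that $\Gamma\vdash t:A$ is derivable in the simple type system below for some $\Gamma$ and $A$) is strongly normalizing for $\to_{d\beta}$, i.e. $t\in SN_{d\beta}$.
   Context: Terms $\mathtt T_J$: $t,u,r ::= x \mid \lambda x.t \mid t(u,y.r)$ (generalized application; $y$ is bound in $r$), taken up to $\alpha$-equivalence; $\{u/x\}t$ is capture-avoiding substitution and $\mathrm{fv}(t)$ the free variables. List contexts: $\mathtt D ::= \Diamond \mid t(u,y.\mathtt D)$, with $\mathtt D\langle s\rangle$ the term obtained by replacing the hole by $s$. The distant beta rule is $\mathtt D\langle\lambda x.t\rangle(u,y.r) \mapsto_{d\beta} \{\{u/x\}\mathtt D\langle t\rangle/y\}r$ (by $\alpha$-conversion, variables bound by $\mathtt D$ are not free in $u$ and $x$ does not occur in $\mathtt D$), and $\to_{d\beta}$ is its closure under all term contexts. $SN_{d\beta}$ is the set of terms admitting no infinite $\to_{d\beta}$-sequence. Simple types $A,B,C ::= \alpha \mid A\to B$; contexts $\Gamma$ are finite maps from variables to simple types; rules: $\Gamma,x:A\vdash x:A$; from $\Gamma,x:A\vdash t:B$ infer $\Gamma\vdash\lambda x.t:A\to B$; from $\Gamma\vdash t:A\to B$, $\Gamma\vdash u:A$ and $\Gamma,y:B\vdash r:C$ infer $\Gamma\vdash t(u,y.r):C$. *)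

theory Defs
  imports Main
begin

text \<open>Terms of Lambda-J in de Bruijn representation (terms up to alpha-equivalence).
  JApp t u r is the generalized application t(u,y.r); r lives under one extra
  binder (index 0 = y).\<close>

datatype trm = Var nat | Lam trm | JApp trm trm trm

primrec lift :: "trm \<Rightarrow> nat \<Rightarrow> trm" where
  "lift (Var i) k = (if i < k then Var i else Var (Suc i))"
| "lift (Lam t) k = Lam (lift t (Suc k))"
| "lift (JApp t u r) k = JApp (lift t k) (lift u k) (lift r (Suc k))"

text \<open>subst t i s: capture-avoiding substitution of s for index i in t,
  decrementing the indices above i (the binder of i disappears).\<close>
primrec subst :: "trm \<Rightarrow> nat \<Rightarrow> trm \<Rightarrow> trm" where
  "subst (Var j) i s = (if j < i then Var j else if j = i then s else Var (j - 1))"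
| "subst (Lam t) i s = Lam (subst t (Suc i) (lift s 0))"
| "subst (JApp t u r) i s = JApp (subst t i s) (subst u i s) (subst r (Suc i) (lift s 0))"

datatype lctx = Hole | LApp trm trm lctx

primrec plug :: "lctx \<Rightarrow> trm \<Rightarrow> trm" where
  "plug Hole s = s"
| "plug (LApp t u D) s = JApp t u (plug D s)"

text \<open>Number of binders crossed by the hole of a list context.\<close>
primrec depth :: "lctx \<Rightarrow> nat" where
  "depth Hole = 0"
| "depth (LApp t u D) = Suc (depth D)"

text \<open>Distant beta: D<\<lambda>x.t>(u,y.r) \<mapsto> {{u/x}D<t>/y}r.  The argument u lives outside
  D, so it is lifted over the depth D binders of D.\<close>
inductive dbeta :: "trm \<Rightarrow> trm \<Rightarrow> bool" (infix "\<rightarrow>\<^sub>d\<^sub>\<beta>" 50) where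
  root: "JApp (plug D (Lam t)) u r \<rightarrow>\<^sub>d\<^sub>\<beta>
           subst r 0 (plug D (subst t 0 (((\<lambda>s. lift s 0) ^^ depth D) u)))"
| lam: "t \<rightarrow>\<^sub>d\<^sub>\<beta> t' \<Longrightarrow> Lam t \<rightarrow>\<^sub>d\<^sub>\<beta> Lam t'"
| app1: "t \<rightarrow>\<^sub>d\<^sub>\<beta> t' \<Longrightarrow> JApp t u r \<rightarrow>\<^sub>d\<^sub>\<beta> JApp t' u r"
| app2: "u \<rightarrow>\<^sub>d\<^sub>\<beta> u' \<Longrightarrow> JApp t u r \<rightarrow>\<^sub>d\<^sub>\<beta> JApp t u' r"
| app3: "r \<rightarrow>\<^sub>d\<^sub>\<beta> r' \<Longrightarrow> JApp t u r \<rightarrow>\<^sub>d\<^sub>\<beta> JApp t u r'"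

definition SN_dbeta :: "trm \<Rightarrow> bool" where
  "SN_dbeta t \<longleftrightarrow> \<not> (\<exists>f. f 0 = t \<and> (\<forall>n. f n \<rightarrow>\<^sub>d\<^sub>\<beta> f (Suc n)))"

datatype ty = Atom nat | Fun ty ty

definition shift_env :: "(nat \<Rightarrow> ty) \<Rightarrow> ty \<Rightarrow> nat \<Rightarrow> ty" where
  "shift_env \<Gamma> T = (\<lambda>i. if i = 0 then T else \<Gamma> (i - 1))"

inductive typing :: "(nat \<Rightarrow> ty) \<Rightarrow> trm \<Rightarrow> ty \<Rightarrow> bool" where
  tvar: "\<Gamma> x = A \<Longrightarrow> typing \<Gamma> (Var x) A"
| tlam: "typing (shift_env \<Gamma> A) t B \<Longrightarrow> typing \<Gamma> (Lam t) (Fun A B)"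
| tapp: "typing \<Gamma> t (Fun A B) \<Longrightarrow> typing \<Gamma> u A \<Longrightarrow> typing (shift_env \<Gamma> B) r C
         \<Longrightarrow> typing \<Gamma> (JApp t u r) C"

end

theory Submission
  imports Defs "HOL-Library.Multiset"
begin

abbreviation lifts :: "nat \<Rightarrow> trm \<Rightarrow> trm" where
  "lifts k u \<equiv> ((\<lambda>s. lift s 0) ^^ k) u"

lemma lift_lift:
  "i < k + 1 \<Longrightarrow> lift (lift t i) (Suc k) = lift (lift t k) i"
  by (induct t arbitrary: i k) auto

lemma lift_subst [simp]:
  "j < i + 1 \<Longrightarrow> lift (subst t j s) i = subst (lift t (i + 1)) j (lift s i)"
  by (induct t arbitrary: i j s) (simp_all add: diff_Suc lift_lift split: nat.split)

lemma lift_subst_lt: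
  "i < j + 1 \<Longrightarrow> lift (subst t j s) i = subst (lift t i) (Suc j) (lift s i)"
  by (induct t arbitrary: i j s) (auto simp: lift_lift)

lemma subst_lift [simp]: "subst (lift t k) k s = t"
  by (induct t arbitrary: k s) simp_all

lemma subst_subst:
  "i < j + 1 \<Longrightarrow> subst (subst t (Suc j) (lift v i)) i (subst u j v) = subst (subst t i u) j v"
  by (induct t arbitrary: i j u v)
    (simp_all add: diff_Suc lift_lift [symmetric] lift_subst_lt split: nat.split)

primrec substD :: "lctx \<Rightarrow> nat \<Rightarrow> trm \<Rightarrow> lctx" where
  "substD Hole i s = Hole"
| "substD (LApp t u D) i s = LApp (subst t i s) (subst u i s) (substD D (Suc i) (lift s 0))"

lemma depth_substD [simp]: "depth (substD D i s) = depth D"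
  by (induct D arbitrary: i s) auto

lemma subst_plug:
  "subst (plug D X) i s = plug (substD D i s) (subst X (i + depth D) (lifts (depth D) s))"
  by (induct D arbitrary: i s) (simp_all add: funpow_Suc_right del: funpow.simps)

lemma subst_lifts:
  "subst (lifts k u) (i + k) (lifts k s) = lifts k (subst u i s)"
  proof (induct k)
  case (Suc k)
  have "lift (subst (lifts k u) (i+k) (lifts k s)) 0 = subst (lift (lifts k u) 0) (Suc (i+k)) (lift (lifts k s) 0)"
    by (rule lift_subst_lt) simp
  with Suc show ?case by simp
qed simp

lemma dbeta_subst: "t \<rightarrow>\<^sub>d\<^sub>\<beta> t' \<Longrightarrow> subst t i s \<rightarrow>\<^sub>d\<^sub>\<beta> subst t' i s"
proof (induction arbitrary: i s rule: dbeta.induct)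
  case (root D t u r)
  let ?D = "substD D i s"
  let ?t = "subst t (Suc (i + depth D)) (lift (lifts (depth D) s) 0)"
  let ?u = "subst u i s"
  let ?r = "subst r (Suc i) (lift s 0)"
  have "subst (JApp (plug D (Lam t)) u r) i s = JApp (plug ?D (Lam ?t)) ?u ?r"
    by (simp add: subst_plug)
  moreover have "JApp (plug ?D (Lam ?t)) ?u ?r \<rightarrow>\<^sub>d\<^sub>\<beta> subst ?r 0 (plug ?D (subst ?t 0 (lifts (depth ?D) ?u)))"
    by (rule dbeta.root)
  moreover have "subst ?r 0 (plug ?D (subst ?t 0 (lifts (depth ?D) ?u)))
      = subst (subst r 0 (plug D (subst t 0 (lifts (depth D) u)))) i s"
  proof -
    have "subst (subst r 0 (plug D (subst t 0 (lifts (depth D) u)))) i s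
        = subst ?r 0 (subst (plug D (subst t 0 (lifts (depth D) u))) i s)"
      using subst_subst[of 0 i r s "plug D (subst t 0 (lifts (depth D) u))"] by simp
    also have "\<dots> = subst ?r 0 (plug ?D (subst (subst t 0 (lifts (depth D) u)) (i + depth D) (lifts (depth D) s)))"
      by (simp add: subst_plug)
    also have "subst (subst t 0 (lifts (depth D) u)) (i + depth D) (lifts (depth D) s)
        = subst ?t 0 (subst (lifts (depth D) u) (i + depth D) (lifts (depth D) s))"
      using subst_subst[of 0 "i + depth D" t "lifts (depth D) s" "lifts (depth D) u"] by simp
    also have "\<dots> = subst ?t 0 (lifts (depth D) ?u)" by (simp add: subst_lifts)
    finally show ?thesis by simp
  qed
  ultimately show ?case by simp
qed (auto intro: dbeta.intros)

section \<open>Strong normalization as accessibility\<close>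

inductive sn :: "trm \<Rightarrow> bool" where
  snI: "(\<And>t'. t \<rightarrow>\<^sub>d\<^sub>\<beta> t' \<Longrightarrow> sn t') \<Longrightarrow> sn t"

lemma sn_SN: "sn t \<Longrightarrow> SN_dbeta t"
proof -
  assume "sn t"
  then have "\<forall>f. f 0 = t \<longrightarrow> \<not> (\<forall>n. f n \<rightarrow>\<^sub>d\<^sub>\<beta> f (Suc n))"
  proof (induction rule: sn.induct)
    case (snI t)
    show ?case
    proof (intro allI impI notI)
      fix f assume f0: "f 0 = t" and ch: "\<forall>n. f n \<rightarrow>\<^sub>d\<^sub>\<beta> f (Suc n)"
      have "t \<rightarrow>\<^sub>d\<^sub>\<beta> f (Suc 0)" using ch f0 by metis
      from snI.IH[OF this] have "\<not> (\<forall>n. (\<lambda>n. f (Suc n)) n \<rightarrow>\<^sub>d\<^sub>\<beta> (\<lambda>n. f (Suc n)) (Suc n))"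
        by auto
      with ch show False by auto
    qed
  qed
  then show ?thesis unfolding SN_dbeta_def by auto
qed

lemma sn_step: "sn t \<Longrightarrow> t \<rightarrow>\<^sub>d\<^sub>\<beta> t' \<Longrightarrow> sn t'"
  by (erule sn.cases) auto

lemma sn_preimage:
  assumes "sn (f t)" and mono: "\<And>a b. a \<rightarrow>\<^sub>d\<^sub>\<beta> b \<Longrightarrow> f a \<rightarrow>\<^sub>d\<^sub>\<beta> f b"
  shows "sn t"
proof -
  have "\<And>x. sn x \<Longrightarrow> \<forall>t. x = f t \<longrightarrow> sn t"
  proof -
    fix x assume "sn x"
    then show "\<forall>t. x = f t \<longrightarrow> sn t"
    proof (induction rule: sn.induct)
      case (snI x)
      show ?case
      proof (intro allI impI)
        fix t assume "x = f t"
        show "sn t"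
        proof (rule sn.snI)
          fix t' assume "t \<rightarrow>\<^sub>d\<^sub>\<beta> t'"
          then have "x \<rightarrow>\<^sub>d\<^sub>\<beta> f t'" using \<open>x = f t\<close> mono by simp
          then show "sn t'" using snI.IH by blast
        qed
      qed
    qed
  qed
  with assms(1) show ?thesis by blast
qed

lemma plug_Lam_Var [simp]: "plug D (Lam q) \<noteq> Var x"
  by (cases D) auto

lemma plug_Lam_Lam [simp]: "(plug D (Lam q) = Lam b) = (D = Hole \<and> q = b)"
  by (cases D) auto

lemma plug_Lam_JApp: "(plug D (Lam q) = JApp a b c) = (\<exists>D0. D = LApp a b D0 \<and> c = plug D0 (Lam q))"
  by (cases D) auto

lemma Var_step [simp]: "\<not> Var x \<rightarrow>\<^sub>d\<^sub>\<beta> M"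
  by (auto elim: dbeta.cases)

lemma Lam_step: "Lam b \<rightarrow>\<^sub>d\<^sub>\<beta> M \<Longrightarrow> \<exists>b'. M = Lam b' \<and> b \<rightarrow>\<^sub>d\<^sub>\<beta> b'"
  by (auto elim: dbeta.cases)

lemma JApp_step:
  "JApp a b c \<rightarrow>\<^sub>d\<^sub>\<beta> M \<Longrightarrow>
     (\<exists>D q. a = plug D (Lam q) \<and> M = subst c 0 (plug D (subst q 0 (lifts (depth D) b))))
   \<or> (\<exists>a'. a \<rightarrow>\<^sub>d\<^sub>\<beta> a' \<and> M = JApp a' b c)
   \<or> (\<exists>b'. b \<rightarrow>\<^sub>d\<^sub>\<beta> b' \<and> M = JApp a b' c)
   \<or> (\<exists>c'. c \<rightarrow>\<^sub>d\<^sub>\<beta> c' \<and> M = JApp a b c')"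
  by (erule dbeta.cases) auto

lemma sn_Var [simp]: "sn (Var x)"
  by (rule snI) simp

lemma sn_Lam: "sn b \<Longrightarrow> sn (Lam b)"
proof (induction rule: sn.induct)
  case (snI b)
  show ?case by (rule sn.snI) (use snI.IH Lam_step in blast)
qed

section \<open>Stacks of generalized applications\<close>

primrec app :: "(trm \<times> trm) list \<Rightarrow> trm \<Rightarrow> trm" where
  "app [] t = t"
| "app (p # fs) t = app fs (JApp t (fst p) (snd p))"

lemma app_append [simp]: "app (fs @ gs) t = app gs (app fs t)"
  by (induct fs arbitrary: t) auto

definition fstep :: "(trm \<times> trm) list \<Rightarrow> (trm \<times> trm) list \<Rightarrow> bool" where
  "fstep fs fs' \<longleftrightarrow> (\<exists>fs1 fs2 u r u' r'. fs = fs1 @ (u,r) # fs2 \<and> fs' = fs1 @ (u',r') # fs2 \<and>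
      ((u \<rightarrow>\<^sub>d\<^sub>\<beta> u' \<and> r' = r) \<or> (u' = u \<and> r \<rightarrow>\<^sub>d\<^sub>\<beta> r')))"

lemma fstep_snoc: "fstep fs fs' \<Longrightarrow> fstep (fs @ [p]) (fs' @ [p])"
  unfolding fstep_def by fastforce

lemma app_step:
  "app fs t \<rightarrow>\<^sub>d\<^sub>\<beta> M \<Longrightarrow>
     (\<exists>t'. t \<rightarrow>\<^sub>d\<^sub>\<beta> t' \<and> M = app fs t')
   \<or> (\<exists>fs'. fstep fs fs' \<and> M = app fs' t)
   \<or> (\<exists>fs1 u r fs2 D q. fs = fs1 @ (u,r) # fs2 \<and> app fs1 t = plug D (Lam q) \<and>
        M = app fs2 (subst r 0 (plug D (subst q 0 (lifts (depth D) u)))))"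
proof (induction fs arbitrary: M rule: rev_induct)
  case Nil
  then show ?case by simp
next
  case (snoc p fs)
  obtain u r where p: "p = (u,r)" by (cases p)
  from snoc.prems have "JApp (app fs t) u r \<rightarrow>\<^sub>d\<^sub>\<beta> M" by (simp add: p)
  from JApp_step[OF this] show ?case
  proof (elim disjE exE conjE)
    fix D q assume h: "app fs t = plug D (Lam q)"
      and M: "M = subst r 0 (plug D (subst q 0 (lifts (depth D) u)))"
    have "fs @ [p] = fs @ (u,r) # [] \<and> app fs t = plug D (Lam q) \<and>
      M = app [] (subst r 0 (plug D (subst q 0 (lifts (depth D) u))))" using h M p by simp
    then show ?thesis by blast
  next
    fix a' assume st: "app fs t \<rightarrow>\<^sub>d\<^sub>\<beta> a'" and M: "M = JApp a' u r"
    from snoc.IH[OF st] show ?thesis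
    proof (elim disjE exE conjE)
      fix t' assume "t \<rightarrow>\<^sub>d\<^sub>\<beta> t'" "a' = app fs t'"
      moreover have "M = app (fs @ [p]) t'" using M p \<open>a' = app fs t'\<close> by simp
      ultimately show ?thesis by blast
    next
      fix fs' assume "fstep fs fs'" "a' = app fs' t"
      moreover have "M = app (fs' @ [p]) t" using M p \<open>a' = app fs' t\<close> by simp
      ultimately show ?thesis using fstep_snoc[of fs fs' p] by blast
    next
      fix fs1 u1 r1 fs2 D q assume a: "fs = fs1 @ (u1, r1) # fs2" "app fs1 t = plug D (Lam q)"
        "a' = app fs2 (subst r1 0 (plug D (subst q 0 (lifts (depth D) u1))))"
      have "fs @ [p] = fs1 @ (u1, r1) # (fs2 @ [p]) \<and> app fs1 t = plug D (Lam q) \<and>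
        M = app (fs2 @ [p]) (subst r1 0 (plug D (subst q 0 (lifts (depth D) u1))))"
        using a M p by simp
      then show ?thesis by blast
    qed
  next
    fix b' assume "u \<rightarrow>\<^sub>d\<^sub>\<beta> b'" "M = JApp (app fs t) b' r"
    have "fstep (fs @ [p]) (fs @ [(b', r)])"
      unfolding fstep_def p
      apply (rule exI[of _ fs], rule exI[of _ "[]"], rule exI[of _ u], rule exI[of _ r], rule exI[of _ b'], rule exI[of _ r])
      using \<open>u \<rightarrow>\<^sub>d\<^sub>\<beta> b'\<close> by simp
    moreover have "M = app (fs @ [(b', r)]) t" using \<open>M = _\<close> by simp
    ultimately show ?thesis by blast
  next
    fix c' assume "r \<rightarrow>\<^sub>d\<^sub>\<beta> c'" "M = JApp (app fs t) u c'"
    have "fstep (fs @ [p]) (fs @ [(u, c')])"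
      unfolding fstep_def p
      apply (rule exI[of _ fs], rule exI[of _ "[]"], rule exI[of _ u], rule exI[of _ r], rule exI[of _ u], rule exI[of _ c'])
      using \<open>r \<rightarrow>\<^sub>d\<^sub>\<beta> c'\<close> by simp
    moreover have "M = app (fs @ [(u, c')]) t" using \<open>M = _\<close> by simp
    ultimately show ?thesis by blast
  qed
qed

primrec enc :: "trm list \<Rightarrow> trm" where
  "enc [] = Var 0"
| "enc (a # as) = JApp (Var 0) a (enc as)"

definition flat :: "(trm \<times> trm) list \<Rightarrow> trm list" where
  "flat fs = concat (map (\<lambda>p. [fst p, snd p]) fs)"

lemma enc_step: "a \<rightarrow>\<^sub>d\<^sub>\<beta> a' \<Longrightarrow> enc (xs @ a # ys) \<rightarrow>\<^sub>d\<^sub>\<beta> enc (xs @ a' # ys)"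
  by (induct xs) (auto intro: dbeta.intros)

lemma sn_JApp_Var0: "sn a \<Longrightarrow> sn c \<Longrightarrow> sn (JApp (Var 0) a c)"
proof (induction a arbitrary: c rule: sn.induct)
  case (snI a)
  note outer = snI.IH
  from snI.prems show ?case
  proof (induction c rule: sn.induct)
    case (snI c)
    show ?case
    proof (rule sn.snI)
      fix M assume "JApp (Var 0) a c \<rightarrow>\<^sub>d\<^sub>\<beta> M"
      from JApp_step[OF this] show "sn M"
      proof (elim disjE exE conjE)
        fix D q assume "Var 0 = plug D (Lam q)" then show ?thesis by (metis plug_Lam_Var)
      next
        fix a' assume "Var 0 \<rightarrow>\<^sub>d\<^sub>\<beta> a'" then show ?thesis by simp
      next
        fix b' assume "a \<rightarrow>\<^sub>d\<^sub>\<beta> b'" "M = JApp (Var 0) b' c"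
        then show ?thesis using outer sn.snI[OF snI.hyps] by blast
      next
        fix c' assume "c \<rightarrow>\<^sub>d\<^sub>\<beta> c'" "M = JApp (Var 0) a c'"
        then show ?thesis using snI.IH by blast
      qed
    qed
  qed
qed

lemma sn_enc: "\<forall>x\<in>set xs. sn x \<Longrightarrow> sn (enc xs)"
  by (induct xs) (auto intro: sn_JApp_Var0)

lemma flat_append [simp]: "flat (fs @ gs) = flat fs @ flat gs"
  by (simp add: flat_def)

lemma flat_Cons [simp]: "flat (p # fs) = fst p # snd p # flat fs"
  by (simp add: flat_def)

lemma set_flat: "x \<in> set (flat fs) \<longleftrightarrow> (\<exists>p\<in>set fs. x = fst p \<or> x = snd p)"
  by (auto simp: flat_def)

lemma enc_fstep: "fstep fs fs' \<Longrightarrow> enc (t # flat fs) \<rightarrow>\<^sub>d\<^sub>\<beta> enc (t # flat fs')"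
proof -
  assume "fstep fs fs'"
  then obtain fs1 fs2 u r u' r' where fs: "fs = fs1 @ (u,r) # fs2" "fs' = fs1 @ (u',r') # fs2"
    and st: "(u \<rightarrow>\<^sub>d\<^sub>\<beta> u' \<and> r' = r) \<or> (u' = u \<and> r \<rightarrow>\<^sub>d\<^sub>\<beta> r')"
    unfolding fstep_def by blast
  from st show ?thesis
  proof
    assume "u \<rightarrow>\<^sub>d\<^sub>\<beta> u' \<and> r' = r"
    then show ?thesis using enc_step[of u u' "t # flat fs1" "r # flat fs2"] fs by simp
  next
    assume "u' = u \<and> r \<rightarrow>\<^sub>d\<^sub>\<beta> r'"
    then show ?thesis using enc_step[of r r' "t # flat fs1 @ [u]" "flat fs2"] fs by simp
  qed
qed

lemma comp_induct:
  assumes "sn t" "\<forall>p\<in>set fs. sn (fst p) \<and> sn (snd p)"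
    and step: "\<And>t fs. (\<And>t'. t \<rightarrow>\<^sub>d\<^sub>\<beta> t' \<Longrightarrow> P t' fs) \<Longrightarrow> (\<And>fs'. fstep fs fs' \<Longrightarrow> P t fs') \<Longrightarrow> P t fs"
  shows "P t fs"
proof -
  have "sn (enc (t # flat fs))"
    using assms(1,2) by (intro sn_enc) (auto simp: set_flat)
  have "\<And>t fs. e = enc (t # flat fs) \<Longrightarrow> P t fs" if "sn e" for e
    using that
  proof (induction e rule: sn.induct)
    case (snI e)
    show ?case
    proof (rule step)
      fix t' assume "t \<rightarrow>\<^sub>d\<^sub>\<beta> t'"
      then have "e \<rightarrow>\<^sub>d\<^sub>\<beta> enc (t' # flat fs)" using snI.prems enc_step[of t t' "[]"] by simp
      then show "P t' fs" using snI.IH by blast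
    next
      fix fs' assume "fstep fs fs'"
      then have "e \<rightarrow>\<^sub>d\<^sub>\<beta> enc (t # flat fs')" using snI.prems enc_fstep by simp
      then show "P t fs'" using snI.IH by blast
    qed
  qed
  with \<open>sn (enc (t # flat fs))\<close> show ?thesis by blast
qed

lemma fstep_set:
  assumes "fstep fs fs'" "\<forall>p\<in>set fs. Q p"
    and "\<And>u r u'. Q (u,r) \<Longrightarrow> u \<rightarrow>\<^sub>d\<^sub>\<beta> u' \<Longrightarrow> Q (u',r)"
    and "\<And>u r r'. Q (u,r) \<Longrightarrow> r \<rightarrow>\<^sub>d\<^sub>\<beta> r' \<Longrightarrow> Q (u,r')"
  shows "\<forall>p\<in>set fs'. Q p"
proof -
  from assms(1) obtain fs1 fs2 u r u' r' where fs: "fs = fs1 @ (u,r) # fs2" "fs' = fs1 @ (u',r') # fs2"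
    and st: "(u \<rightarrow>\<^sub>d\<^sub>\<beta> u' \<and> r' = r) \<or> (u' = u \<and> r \<rightarrow>\<^sub>d\<^sub>\<beta> r')"
    unfolding fstep_def by blast
  have "Q (u,r)" using assms(2) fs by simp
  then have "Q (u',r')" using st assms(3,4) by blast
  then show ?thesis using assms(2) fs by simp
qed

lemma app_snoc_Lam:
  assumes "app (fs0 @ [(u0, r0)]) t = plug D (Lam q)"
  shows "\<exists>D0. D = LApp (app fs0 t) u0 D0 \<and> r0 = plug D0 (Lam q)"
proof -
  have "plug D (Lam q) = JApp (app fs0 t) u0 r0" using assms by simp
  then show ?thesis unfolding plug_Lam_JApp by blast
qed

lemma sn_Var_stack:
  assumes a: "\<forall>p\<in>set fs. snd p = Var 0 \<and> sn (fst p)"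
  shows "sn (app fs (Var x))"
proof -
  have "Var x = Var x \<longrightarrow> (\<forall>p\<in>set fs. snd p = Var 0 \<and> sn (fst p)) \<longrightarrow> sn (app fs (Var x))"
  proof (rule comp_induct[where P = "\<lambda>t fs. t = Var x \<longrightarrow> (\<forall>p\<in>set fs. snd p = Var 0 \<and> sn (fst p)) \<longrightarrow> sn (app fs t)"])
    fix t fs
    assume IH1: "\<And>t'. t \<rightarrow>\<^sub>d\<^sub>\<beta> t' \<Longrightarrow> t' = Var x \<longrightarrow> (\<forall>p\<in>set fs. snd p = Var 0 \<and> sn (fst p)) \<longrightarrow> sn (app fs t')"
      and IH2: "\<And>fs'. fstep fs fs' \<Longrightarrow> t = Var x \<longrightarrow> (\<forall>p\<in>set fs'. snd p = Var 0 \<and> sn (fst p)) \<longrightarrow> sn (app fs' t)"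
    show "t = Var x \<longrightarrow> (\<forall>p\<in>set fs. snd p = Var 0 \<and> sn (fst p)) \<longrightarrow> sn (app fs t)"
    proof (intro impI)
      assume t: "t = Var x" and fsa: "\<forall>p\<in>set fs. snd p = Var 0 \<and> sn (fst p)"
      show "sn (app fs t)"
      proof (rule snI)
        fix M assume "app fs t \<rightarrow>\<^sub>d\<^sub>\<beta> M"
        from app_step[OF this] show "sn M"
        proof (elim disjE exE conjE)
          fix t' assume "t \<rightarrow>\<^sub>d\<^sub>\<beta> t'" then show ?thesis using t by simp
        next
          fix fs' assume fs': "fstep fs fs'" "M = app fs' t"
          have "\<forall>p\<in>set fs'. snd p = Var 0 \<and> sn (fst p)"
            by (rule fstep_set[OF fs'(1) fsa]) (auto intro: sn_step)
          then show ?thesis using IH2[OF fs'(1)] t fs'(2) by simp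
        next
          fix fs1 u r fs2 D q
          assume fs: "fs = fs1 @ (u, r) # fs2" and h: "app fs1 t = plug D (Lam q)"
          show ?thesis
          proof (cases fs1 rule: rev_exhaust)
            case Nil then show ?thesis using h t by simp (metis plug_Lam_Var)
          next
            case (snoc fs0 p0)
            obtain u0 r0 where p0: "p0 = (u0, r0)" by (cases p0)
            from app_snoc_Lam[of fs0 u0 r0 t D q] h snoc p0
            obtain D0 where "r0 = plug D0 (Lam q)" by auto
            moreover have "r0 = Var 0" using fsa fs snoc p0 by auto
            ultimately show ?thesis by (metis plug_Lam_Var)
          qed
        qed
      qed
    qed
  qed (use a in auto)
  then show ?thesis using a by simp
qed


section \<open>Reducibility\<close>

primrec Red :: "ty \<Rightarrow> trm set" where
  "Red (Atom n) = {t. sn t}"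
| "Red (Fun A B) = {t. \<forall>u\<in>Red A. JApp t u (Var 0) \<in> Red B}"

inductive gd :: "ty \<Rightarrow> (trm \<times> trm) list \<Rightarrow> ty list \<Rightarrow> ty \<Rightarrow> bool" where
  gnil: "gd T [] [] T"
| gcons: "u \<in> Red A \<Longrightarrow> (\<forall>s\<in>Red B. subst r 0 s \<in> Red C) \<Longrightarrow> gd C fs Ts E
    \<Longrightarrow> gd (Fun A B) ((u,r) # fs) (Fun A B # Ts) E"

inductive vgd :: "ty \<Rightarrow> (trm \<times> trm) list \<Rightarrow> ty list \<Rightarrow> bool" where
  vnil: "vgd (Atom n) [] []"
| vcons: "u \<in> Red A \<Longrightarrow> vgd B fs Ts \<Longrightarrow> vgd (Fun A B) ((u, Var 0) # fs) (Fun A B # Ts)"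

lemma RC: "t \<in> Red T \<longleftrightarrow> (\<forall>fs Ts. vgd T fs Ts \<longrightarrow> sn (app fs t))"
proof (induction T arbitrary: t)
  case (Atom n)
  show ?case
  proof
    assume "t \<in> Red (Atom n)"
    then show "\<forall>fs Ts. vgd (Atom n) fs Ts \<longrightarrow> sn (app fs t)"
      by (auto elim: vgd.cases)
  next
    assume "\<forall>fs Ts. vgd (Atom n) fs Ts \<longrightarrow> sn (app fs t)"
    then have "sn (app [] t)" using vgd.vnil by blast
    then show "t \<in> Red (Atom n)" by simp
  qed
next
  case (Fun A B)
  show ?case
  proof
    assume t: "t \<in> Red (Fun A B)"
    show "\<forall>fs Ts. vgd (Fun A B) fs Ts \<longrightarrow> sn (app fs t)"
    proof (intro allI impI)
      fix fs Ts assume "vgd (Fun A B) fs Ts"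
      then obtain u fs' Ts' where "fs = (u, Var 0) # fs'" "u \<in> Red A" "vgd B fs' Ts'"
        by (cases rule: vgd.cases) auto
      moreover have "JApp t u (Var 0) \<in> Red B" using t \<open>u \<in> Red A\<close> by simp
      ultimately show "sn (app fs t)" using Fun.IH(2) by auto
    qed
  next
    assume h: "\<forall>fs Ts. vgd (Fun A B) fs Ts \<longrightarrow> sn (app fs t)"
    have "JApp t u (Var 0) \<in> Red B" if "u \<in> Red A" for u
    proof -
      have "\<forall>fs Ts. vgd B fs Ts \<longrightarrow> sn (app fs (JApp t u (Var 0)))"
      proof (intro allI impI)
        fix fs Ts assume "vgd B fs Ts"
        then have "vgd (Fun A B) ((u, Var 0) # fs) (Fun A B # Ts)" using that by (rule vgd.vcons[rotated])
        then show "sn (app fs (JApp t u (Var 0)))" using h by fastforce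
      qed
      then show ?thesis using Fun.IH(2) by blast
    qed
    then show "t \<in> Red (Fun A B)" by simp
  qed
qed

lemma CR2: "t \<in> Red T \<Longrightarrow> t \<rightarrow>\<^sub>d\<^sub>\<beta> t' \<Longrightarrow> t' \<in> Red T"
proof (induction T arbitrary: t t')
  case (Atom n) then show ?case by (auto intro: sn_step)
next
  case (Fun A B)
  then show ?case by simp (blast intro: dbeta.app1)
qed

lemma vgd_gd: "vgd T fs Ts \<Longrightarrow> \<exists>n. gd T fs Ts (Atom n)"
proof (induction rule: vgd.induct)
  case (vnil n) then show ?case by (auto intro: gd.gnil)
next
  case (vcons u A B fs Ts)
  then obtain n where "gd B fs Ts (Atom n)" by blast
  moreover have "\<forall>s\<in>Red B. subst (Var 0) 0 s \<in> Red B" by simp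
  ultimately show ?case using vcons.hyps(1) by (blast intro: gd.gcons)
qed

lemma vgd_size: "vgd T fs Ts \<Longrightarrow> \<forall>X\<in>set Ts. size X \<le> size T"
  by (induction rule: vgd.induct) fastforce+

lemma CR_all: "(\<forall>t\<in>Red T. sn t) \<and> (\<forall>x. Var x \<in> Red T) \<and>
   (\<forall>fs Ts. vgd T fs Ts \<longrightarrow> (\<forall>p\<in>set fs. snd p = Var 0 \<and> sn (fst p)))"
proof (induction T)
  case (Atom n)
  then show ?case by (auto elim: vgd.cases)
next
  case (Fun A B)
  have IA1: "\<forall>t\<in>Red A. sn t" and IA2: "\<forall>x. Var x \<in> Red A" using Fun.IH(1) by blast+
  have IB1: "\<forall>t\<in>Red B. sn t" using Fun.IH(2) by blast
  have IB3: "\<And>fs Ts. vgd B fs Ts \<Longrightarrow> (\<forall>p\<in>set fs. snd p = Var 0 \<and> sn (fst p))"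
    using Fun.IH(2) by blast
  have third: "\<forall>fs Ts. vgd (Fun A B) fs Ts \<longrightarrow> (\<forall>p\<in>set fs. snd p = Var 0 \<and> sn (fst p))"
  proof (intro allI impI)
    fix fs Ts assume "vgd (Fun A B) fs Ts"
    then obtain u fs' Ts' where o: "fs = (u, Var 0) # fs'" "u \<in> Red A" "vgd B fs' Ts'"
      by (cases rule: vgd.cases) auto
    have "sn u" using o(2) IA1 by blast
    then show "\<forall>p\<in>set fs. snd p = Var 0 \<and> sn (fst p)" using IB3[OF o(3)] o(1) by simp
  qed
  have second: "\<forall>x. Var x \<in> Red (Fun A B)"
  proof
    fix x
    show "Var x \<in> Red (Fun A B)"
      unfolding RC[of "Var x"] using third sn_Var_stack by blast
  qed
  have first: "\<forall>t\<in>Red (Fun A B). sn t"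
  proof
    fix t assume "t \<in> Red (Fun A B)"
    then have "JApp t (Var 0) (Var 0) \<in> Red B" using IA2 by simp
    then have "sn (JApp t (Var 0) (Var 0))" using IB1 by blast
    then show "sn t" by (rule sn_preimage) (rule dbeta.app1)
  qed
  from first second third show ?case by blast
qed

lemma Red_sn: "t \<in> Red T \<Longrightarrow> sn t"
  using CR_all[of T] by blast

lemma Var_Red [simp]: "Var x \<in> Red T"
  using CR_all[of T] by blast

lemma cont_sn: "\<forall>s\<in>Red B. subst r 0 s \<in> Red C \<Longrightarrow> sn r"
proof -
  assume "\<forall>s\<in>Red B. subst r 0 s \<in> Red C"
  then have "subst r 0 (Var 0) \<in> Red C" by simp
  then have "sn (subst r 0 (Var 0))" by (rule Red_sn)
  then show "sn r" by (rule sn_preimage) (rule dbeta_subst)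
qed

lemma cont_step: "\<forall>s\<in>Red B. subst r 0 s \<in> Red C \<Longrightarrow> r \<rightarrow>\<^sub>d\<^sub>\<beta> r' \<Longrightarrow> \<forall>s\<in>Red B. subst r' 0 s \<in> Red C"
  using CR2 dbeta_subst by blast

lemma gd_append: "gd T (fs1 @ fs2) Ts E \<Longrightarrow>
   \<exists>Ts1 Ts2 C. Ts = Ts1 @ Ts2 \<and> gd T fs1 Ts1 C \<and> gd C fs2 Ts2 E"
proof (induction fs1 arbitrary: T Ts)
  case Nil then show ?case by (auto intro: gd.gnil)
next
  case (Cons p fs1)
  from Cons.prems obtain u r A B C fs Ts' where
    p: "p = (u,r)" "T = Fun A B" "Ts = Fun A B # Ts'" "u \<in> Red A" "\<forall>s\<in>Red B. subst r 0 s \<in> Red C"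
    "gd C (fs1 @ fs2) Ts' E"
    by (cases rule: gd.cases) auto
  from Cons.IH[OF p(6)] obtain Ts1 Ts2 C' where "Ts' = Ts1 @ Ts2" "gd C fs1 Ts1 C'" "gd C' fs2 Ts2 E"
    by blast
  note q = this
  have "gd T (p # fs1) (Fun A B # Ts1) C'"
    unfolding p(1,2) by (rule gd.gcons[OF p(4) p(5) q(2)])
  then show ?case using q p(3) by (intro exI[of _ "Fun A B # Ts1"] exI[of _ Ts2] exI[of _ C']) simp
qed

lemma gd_append2: "gd T fs1 Ts1 C \<Longrightarrow> gd C fs2 Ts2 E \<Longrightarrow> gd T (fs1 @ fs2) (Ts1 @ Ts2) E"
  by (induction rule: gd.induct) (auto intro: gd.gcons)

lemma gd_comp: "gd T fs Ts E \<Longrightarrow> \<forall>p\<in>set fs. sn (fst p) \<and> sn (snd p)"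
  by (induction rule: gd.induct) (auto intro: Red_sn cont_sn)

lemma gd_fstep: "gd T fs Ts E \<Longrightarrow> fstep fs fs' \<Longrightarrow> gd T fs' Ts E"
proof -
  assume g: "gd T fs Ts E" and "fstep fs fs'"
  then obtain fs1 fs2 u r u' r' where fs: "fs = fs1 @ (u,r) # fs2" "fs' = fs1 @ (u',r') # fs2"
    and st: "(u \<rightarrow>\<^sub>d\<^sub>\<beta> u' \<and> r' = r) \<or> (u' = u \<and> r \<rightarrow>\<^sub>d\<^sub>\<beta> r')"
    unfolding fstep_def by blast
  from gd_append[of T fs1 "(u,r) # fs2" Ts E] g fs obtain Ts1 Ts2 C where
    a: "Ts = Ts1 @ Ts2" "gd T fs1 Ts1 C" "gd C ((u,r) # fs2) Ts2 E" by auto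
  from a(3) obtain A B C' Ts' where b: "C = Fun A B" "Ts2 = Fun A B # Ts'" "u \<in> Red A"
    "\<forall>s\<in>Red B. subst r 0 s \<in> Red C'" "gd C' fs2 Ts' E"
    by (cases rule: gd.cases) auto
  have "u' \<in> Red A"
  proof (cases "u \<rightarrow>\<^sub>d\<^sub>\<beta> u' \<and> r' = r")
    case True then show ?thesis using b(3) CR2[of u A u'] by simp
  next
    case False then have "u' = u" using st by blast
    then show ?thesis using b(3) by simp
  qed
  moreover have "\<forall>s\<in>Red B. subst r' 0 s \<in> Red C'"
  proof (cases "u \<rightarrow>\<^sub>d\<^sub>\<beta> u' \<and> r' = r")
    case True then show ?thesis using b(4) by simp
  next
    case False then have "r \<rightarrow>\<^sub>d\<^sub>\<beta> r'" using st by blast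
    then show ?thesis using b(4) cont_step[of B r C' r'] by simp
  qed
  ultimately have "gd C ((u',r') # fs2) Ts2 E" using b by (auto intro: gd.gcons)
  from gd_append2[OF a(2) this] show ?thesis using a(1) fs(2) by simp
qed


definition H :: "trm \<Rightarrow> ty \<Rightarrow> bool" where
  "H t T \<longleftrightarrow> t \<in> Red T \<or> (\<exists>b A B. t = Lam b \<and> T = Fun A B \<and> (\<forall>u\<in>Red A. subst b 0 u \<in> Red B))"

lemma H_sn: "H t T \<Longrightarrow> sn t"
proof (unfold H_def, elim disjE exE conjE)
  assume "t \<in> Red T" then show "sn t" by (rule Red_sn)
next
  fix b A B assume t: "t = Lam b" and h: "\<forall>u\<in>Red A. subst b 0 u \<in> Red B"
  have "subst b 0 (Var 0) \<in> Red B" using h by simp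
  then have "sn (subst b 0 (Var 0))" by (rule Red_sn)
  then have "sn b" by (rule sn_preimage) (rule dbeta_subst)
  then show "sn t" unfolding t by (rule sn_Lam)
qed

lemma H_step: "H t T \<Longrightarrow> t \<rightarrow>\<^sub>d\<^sub>\<beta> t' \<Longrightarrow> H t' T"
proof (unfold H_def, elim disjE exE conjE)
  assume "t \<in> Red T" "t \<rightarrow>\<^sub>d\<^sub>\<beta> t'"
  then have "t' \<in> Red T" by (rule CR2)
  then show "t' \<in> Red T \<or> (\<exists>b A B. t' = Lam b \<and> T = Fun A B \<and> (\<forall>u\<in>Red A. subst b 0 u \<in> Red B))" by blast
next
  fix b A B assume t: "t = Lam b" and T: "T = Fun A B" and h: "\<forall>u\<in>Red A. subst b 0 u \<in> Red B"
    and st: "t \<rightarrow>\<^sub>d\<^sub>\<beta> t'"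
  from Lam_step st t obtain b' where "t' = Lam b'" "b \<rightarrow>\<^sub>d\<^sub>\<beta> b'" by blast
  moreover have "\<forall>u\<in>Red A. subst b' 0 u \<in> Red B" by (rule cont_step[OF h \<open>b \<rightarrow>\<^sub>d\<^sub>\<beta> b'\<close>])
  ultimately show "t' \<in> Red T \<or> (\<exists>b A B. t' = Lam b \<and> T = Fun A B \<and> (\<forall>u\<in>Red A. subst b 0 u \<in> Red B))"
    using T by blast
qed

lemma lifts_Suc: "lifts (Suc k) u = lifts k (lift u 0)"
  by (simp only: funpow_Suc_right o_def)

lemma G_aux: "\<forall>T fs Ts t n. mset (map size Ts) = M \<longrightarrow> gd T fs Ts (Atom n) \<longrightarrow> H t T \<longrightarrow> sn (app fs t)"
proof (induction M rule: wf_induct[OF wf_mult[OF wf_less_than]])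
  case (1 M)
  note outer = 1
  show ?case
  proof (intro allI impI)
    fix T fs Ts t n assume M: "mset (map size Ts) = M" and g0: "gd T fs Ts (Atom n)" and h0: "H t T"
    have OIH: "\<And>T' fs' Ts' t' n'. (mset (map size Ts'), M) \<in> mult less_than \<Longrightarrow> gd T' fs' Ts' (Atom n')
        \<Longrightarrow> H t' T' \<Longrightarrow> sn (app fs' t')"
      using outer by blast
    define P where "P = (\<lambda>t fs. gd T fs Ts (Atom n) \<longrightarrow> H t T \<longrightarrow> sn (app fs t))"
    have "P t fs"
    proof (rule comp_induct[of t fs P])
      show "sn t" by (rule H_sn[OF h0])
      show "\<forall>p\<in>set fs. sn (fst p) \<and> sn (snd p)" by (rule gd_comp[OF g0])
    next
      fix t fs
      assume IH1: "\<And>t'. t \<rightarrow>\<^sub>d\<^sub>\<beta> t' \<Longrightarrow> P t' fs" and IH2: "\<And>fs'. fstep fs fs' \<Longrightarrow> P t fs'"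
      show "P t fs" unfolding P_def
      proof (intro impI)
        assume g: "gd T fs Ts (Atom n)" and h: "H t T"
        show "sn (app fs t)"
        proof (rule snI)
          fix N assume "app fs t \<rightarrow>\<^sub>d\<^sub>\<beta> N"
          from app_step[OF this] show "sn N"
          proof (elim disjE exE conjE)
            fix t' assume st: "t \<rightarrow>\<^sub>d\<^sub>\<beta> t'" and N: "N = app fs t'"
            have "H t' T" by (rule H_step[OF h st])
            then show ?thesis using IH1[OF st] g N unfolding P_def by simp
          next
            fix fs' assume st: "fstep fs fs'" and N: "N = app fs' t"
            have "gd T fs' Ts (Atom n)" by (rule gd_fstep[OF g st])
            then show ?thesis using IH2[OF st] h N unfolding P_def by simp
          next
            fix fs1 u r fs2 D q
            assume fs: "fs = fs1 @ (u,r) # fs2" and hd: "app fs1 t = plug D (Lam q)"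
              and N: "N = app fs2 (subst r 0 (plug D (subst q 0 (lifts (depth D) u))))"
            from gd_append[of T fs1 "(u,r)#fs2" Ts "Atom n"] g fs obtain Ts1 Ts2' C where
              a: "Ts = Ts1 @ Ts2'" "gd T fs1 Ts1 C" "gd C ((u,r)#fs2) Ts2' (Atom n)" by auto
            from a(3) obtain A B C' Ts2 where b: "C = Fun A B" "Ts2' = Fun A B # Ts2" "u \<in> Red A"
              "\<forall>s\<in>Red B. subst r 0 s \<in> Red C'" "gd C' fs2 Ts2 (Atom n)"
              by (cases rule: gd.cases) auto
            define X where "X = plug D (subst q 0 (lifts (depth D) u))"
            have XR: "X \<in> Red B"
            proof (cases fs1 rule: rev_exhaust)
              case Nil
              then have TC: "T = C" using a(2) by (auto elim: gd.cases)
              have tq: "t = plug D (Lam q)" using hd Nil by simp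
              from h[unfolded H_def] show ?thesis
              proof (elim disjE exE conjE)
                assume "t \<in> Red T"
                then have "JApp t u (Var 0) \<in> Red B" using b(1) TC b(3) by simp
                moreover have "JApp t u (Var 0) \<rightarrow>\<^sub>d\<^sub>\<beta> X"
                  unfolding tq X_def using dbeta.root[of D q u "Var 0"] by simp
                ultimately show ?thesis by (rule CR2)
              next
                fix b' A' B' assume tb: "t = Lam b'" and TA: "T = Fun A' B'"
                  and hb: "\<forall>u\<in>Red A'. subst b' 0 u \<in> Red B'"
                have AB: "A' = A" "B' = B" using b(1) TC TA by auto
                have "plug D (Lam q) = Lam b'" using tq tb by simp
                then have "D = Hole" "q = b'" by simp_all
                then show ?thesis unfolding X_def using hb AB b(3) by simp
              qed
            next
              case (snoc fs0 p0)
              obtain u0 r0 where p0: "p0 = (u0, r0)" by (cases p0)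
              from app_snoc_Lam[of fs0 u0 r0 t D q] hd snoc p0 obtain D0 where
                D: "D = LApp (app fs0 t) u0 D0" and r0: "r0 = plug D0 (Lam q)" by auto
              from gd_append[of T fs0 "[(u0,r0)]" Ts1 C] a(2) snoc p0 obtain Ts0 Ts01 C0 where
                c: "Ts1 = Ts0 @ Ts01" "gd T fs0 Ts0 C0" "gd C0 [(u0,r0)] Ts01 C" by auto
              from c(3) obtain A0 B0 C1 Ts' where d0: "C0 = Fun A0 B0" "Ts01 = Fun A0 B0 # Ts'" "u0 \<in> Red A0"
                  "\<forall>s\<in>Red B0. subst r0 0 s \<in> Red C1" "gd C1 [] Ts' C"
                by (cases rule: gd.cases) auto
              have C1: "C1 = C" and "Ts' = []" using d0(5) by (cases rule: gd.cases, auto)+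
              then have d: "C0 = Fun A0 B0" "Ts01 = [Fun A0 B0]" "u0 \<in> Red A0"
                  "\<forall>s\<in>Red B0. subst r0 0 s \<in> Red C1" using d0 by auto
              define r'' where "r'' = plug D0 (subst q 0 (lifts (Suc (depth D0)) u))"
              have X: "X = JApp (app fs0 t) u0 r''" unfolding X_def r''_def D by simp
              have st: "JApp r0 (lift u 0) (Var 0) \<rightarrow>\<^sub>d\<^sub>\<beta> r''"
              proof -
                have "JApp (plug D0 (Lam q)) (lift u 0) (Var 0) \<rightarrow>\<^sub>d\<^sub>\<beta>
                    subst (Var 0) 0 (plug D0 (subst q 0 (lifts (depth D0) (lift u 0))))"
                  by (rule dbeta.root)
                then show ?thesis unfolding r0 r''_def lifts_Suc by simp
              qed
              have r''R: "\<forall>s\<in>Red B0. subst r'' 0 s \<in> Red B"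
              proof
                fix s assume s: "s \<in> Red B0"
                have 1: "subst (JApp r0 (lift u 0) (Var 0)) 0 s \<rightarrow>\<^sub>d\<^sub>\<beta> subst r'' 0 s" by (rule dbeta_subst[OF st])
                have 2: "subst (JApp r0 (lift u 0) (Var 0)) 0 s = JApp (subst r0 0 s) u (Var 0)" by simp
                have "subst r0 0 s \<in> Red (Fun A B)" using d(4) s C1 b(1) by simp
                then have 3: "JApp (subst r0 0 s) u (Var 0) \<in> Red B" using b(3) by simp
                from CR2[OF 3] 1 2 show "subst r'' 0 s \<in> Red B" by simp
              qed
              show ?thesis unfolding RC[of X B]
              proof (intro allI impI)
                fix fsv Tsv assume v: "vgd B fsv Tsv"
                from vgd_gd[OF v] obtain m where gv: "gd B fsv Tsv (Atom m)" by blast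
                have "gd (Fun A0 B0) ((u0, r'') # fsv) (Fun A0 B0 # Tsv) (Atom m)"
                  by (rule gd.gcons[OF d(3) r''R gv])
                from gd_append2[OF c(2)[unfolded d(1)] this]
                have g': "gd T (fs0 @ (u0, r'') # fsv) (Ts0 @ Fun A0 B0 # Tsv) (Atom m)" .
                have lt: "(mset (map size (Ts0 @ Fun A0 B0 # Tsv)), M) \<in> mult less_than"
                proof -
                  have Ts: "Ts = Ts0 @ Fun A0 B0 # Fun A B # Ts2" using a(1) b(2) c(1) d(2) by simp
                  let ?I = "mset (map size (Ts0 @ [Fun A0 B0]))"
                  let ?K = "mset (map size Tsv)"
                  let ?J = "add_mset (size (Fun A B)) (mset (map size Ts2))"
                  have "\<forall>k\<in>set_mset ?K. \<exists>j\<in>set_mset ?J. (k, j) \<in> less_than"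
                  proof
                    fix k assume "k \<in> set_mset ?K"
                    then obtain Y where "Y \<in> set Tsv" "k = size Y" by auto
                    then have "k \<le> size B" using vgd_size[OF v] by auto
                    then have "(k, size (Fun A B)) \<in> less_than" by simp
                    then show "\<exists>j\<in>set_mset ?J. (k, j) \<in> less_than" by auto
                  qed
                  then have "(?I + ?K, ?I + ?J) \<in> mult less_than"
                    by (intro one_step_implies_mult) auto
                  moreover have "?I + ?K = mset (map size (Ts0 @ Fun A0 B0 # Tsv))" by simp
                  moreover have "?I + ?J = M" using M Ts by (simp add: add_mset_commute)
                  ultimately show ?thesis by simp
                qed
                have "sn (app (fs0 @ (u0, r'') # fsv) t)" by (rule OIH[OF lt g' h])
                then show "sn (app fsv X)" unfolding X by simp
              qed
            qed
            have "subst r 0 X \<in> Red C'" using b(4) XR by blast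
            then have hX: "H (subst r 0 X) C'" unfolding H_def by blast
            have lt2: "(mset (map size Ts2), M) \<in> mult less_than"
            proof -
              let ?I = "mset (map size Ts2)"
              let ?J = "mset (map size (Ts1 @ [Fun A B]))"
              have "(?I + {#}, ?I + ?J) \<in> mult less_than" by (rule one_step_implies_mult) auto
              moreover have "?I + ?J = M" using M a(1) b(2) by (simp add: add_mset_commute ac_simps)
              ultimately show ?thesis by simp
            qed
            have "sn (app fs2 (subst r 0 X))" by (rule OIH[OF lt2 b(5) hX])
            then show ?thesis unfolding N X_def .
          qed
        qed
      qed
    qed
    then show "sn (app fs t)" using g0 h0 unfolding P_def by simp
  qed
qed

lemma G: "gd T fs Ts (Atom n) \<Longrightarrow> H t T \<Longrightarrow> sn (app fs t)"
  using G_aux by blast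

lemma Red_JApp:
  assumes t: "t \<in> Red (Fun A B)" and u: "u \<in> Red A" and r: "\<forall>s\<in>Red B. subst r 0 s \<in> Red C"
  shows "JApp t u r \<in> Red C"
  unfolding RC[of _ C]
proof (intro allI impI)
  fix fs Ts assume "vgd C fs Ts"
  from vgd_gd[OF this] obtain m where "gd C fs Ts (Atom m)" by blast
  then have "gd (Fun A B) ((u,r) # fs) (Fun A B # Ts) (Atom m)" by (rule gd.gcons[OF u r])
  moreover have "H t (Fun A B)" using t unfolding H_def by blast
  ultimately have "sn (app ((u,r) # fs) t)" by (rule G)
  then show "sn (app fs (JApp t u r))" by simp
qed

lemma Red_Lam:
  assumes h: "\<forall>u\<in>Red A. subst b 0 u \<in> Red B"
  shows "Lam b \<in> Red (Fun A B)"
  unfolding RC[of _ "Fun A B"]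
proof (intro allI impI)
  fix fs Ts assume "vgd (Fun A B) fs Ts"
  from vgd_gd[OF this] obtain m where g: "gd (Fun A B) fs Ts (Atom m)" by blast
  moreover have "H (Lam b) (Fun A B)" using h unfolding H_def by blast
  ultimately show "sn (app fs (Lam b))" by (rule G)
qed

section \<open>Parallel substitution and the fundamental lemma\<close>

definition up :: "(nat \<Rightarrow> trm) \<Rightarrow> nat \<Rightarrow> trm" where
  "up \<sigma> i = (case i of 0 \<Rightarrow> Var 0 | Suc j \<Rightarrow> lift (\<sigma> j) 0)"

definition scons :: "trm \<Rightarrow> (nat \<Rightarrow> trm) \<Rightarrow> nat \<Rightarrow> trm" where
  "scons u \<sigma> i = (case i of 0 \<Rightarrow> u | Suc j \<Rightarrow> \<sigma> j)"

primrec psubst :: "(nat \<Rightarrow> trm) \<Rightarrow> trm \<Rightarrow> trm" where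
  "psubst \<sigma> (Var i) = \<sigma> i"
| "psubst \<sigma> (Lam t) = Lam (psubst (up \<sigma>) t)"
| "psubst \<sigma> (JApp t u r) = JApp (psubst \<sigma> t) (psubst \<sigma> u) (psubst (up \<sigma>) r)"

lemma upn_lt: "i < k \<Longrightarrow> (up ^^ k) \<rho> i = Var i"
proof (induction k arbitrary: i)
  case (Suc k)
  then show ?case by (cases i) (auto simp: up_def)
qed simp

lemma upn_ge: "k \<le> i \<Longrightarrow> (up ^^ k) \<rho> i = lifts k (\<rho> (i - k))"
proof (induction k arbitrary: i)
  case (Suc k)
  then obtain j where "i = Suc j" "k \<le> j" by (cases i) auto
  then show ?case using Suc.IH[of j] by (simp add: up_def)
qed simp

lemma lifts_Var0: "lifts k (Var 0) = Var k"
  by (induct k) auto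

lemma lifts_lift: "lifts k (lift x 0) = lift (lifts k x) k"
proof (induct k)
  case (Suc k)
  have "lifts (Suc k) (lift x 0) = lift (lift (lifts k x) k) 0" using Suc by simp
  also have "\<dots> = lift (lift (lifts k x) 0) (Suc k)" using lift_lift[of 0 k "lifts k x"] by simp
  finally show ?case by simp
qed simp

lemma psubst_subst_gen:
  "subst (psubst ((up ^^ k) (up \<sigma>)) t) k (lifts k u) = psubst ((up ^^ k) (scons u \<sigma>)) t"
proof (induction t arbitrary: k)
  case (Var i)
  consider "i < k" | "i = k" | "k < i" by arith
  then show ?case
  proof cases
    case 1 then show ?thesis by (simp add: upn_lt)
  next
    case 2
    have "(up ^^ k) (up \<sigma>) i = lifts k (up \<sigma> 0)" using upn_ge[of k i "up \<sigma>"] 2 by simp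
    moreover have "up \<sigma> 0 = Var 0" by (simp add: up_def)
    moreover have "(up ^^ k) (scons u \<sigma>) i = lifts k (scons u \<sigma> 0)" using upn_ge[of k i "scons u \<sigma>"] 2 by simp
    moreover have "scons u \<sigma> 0 = u" by (simp add: scons_def)
    ultimately show ?thesis using 2 by (simp add: lifts_Var0)
  next
    case 3
    then obtain j where j: "i - k = Suc j" by (cases "i - k") auto
    have "(up ^^ k) (up \<sigma>) i = lifts k (up \<sigma> (i - k))" using upn_ge[of k i "up \<sigma>"] 3 by simp
    moreover have "up \<sigma> (i - k) = lift (\<sigma> j) 0" using j by (simp add: up_def)
    ultimately have e1: "(up ^^ k) (up \<sigma>) i = lift (lifts k (\<sigma> j)) k" by (simp add: lifts_lift)
    have "(up ^^ k) (scons u \<sigma>) i = lifts k (scons u \<sigma> (i - k))" using upn_ge[of k i "scons u \<sigma>"] 3 by simp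
    moreover have "scons u \<sigma> (i - k) = \<sigma> j" using j by (simp add: scons_def)
    ultimately have e2: "(up ^^ k) (scons u \<sigma>) i = lifts k (\<sigma> j)" by simp
    from e1 e2 show ?thesis by simp
  qed
next
  case (Lam t)
  show ?case using Lam.IH[of "Suc k"] by simp
next
  case (JApp t1 t2 t3)
  show ?case using JApp.IH(1)[of k] JApp.IH(2)[of k] JApp.IH(3)[of "Suc k"] by simp
qed

lemma psubst_subst: "subst (psubst (up \<sigma>) t) 0 u = psubst (scons u \<sigma>) t"
  using psubst_subst_gen[of 0 \<sigma> t u] by simp

lemma up_Var: "up Var = Var"
  by (rule ext) (simp add: up_def split: nat.split)

lemma psubst_Var: "psubst Var t = t"
  by (induct t) (simp_all add: up_Var)

lemma fundamental:
  "typing \<Gamma> t T \<Longrightarrow> \<forall>\<sigma>. (\<forall>i. \<sigma> i \<in> Red (\<Gamma> i)) \<longrightarrow> psubst \<sigma> t \<in> Red T"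
proof (induction rule: typing.induct)
  case (tvar \<Gamma> x A)
  then show ?case by auto
next
  case (tlam \<Gamma> A t B)
  show ?case
  proof (intro allI impI)
    fix \<sigma> assume s: "\<forall>i. \<sigma> i \<in> Red (\<Gamma> i)"
    have "\<forall>u\<in>Red A. subst (psubst (up \<sigma>) t) 0 u \<in> Red B"
    proof
      fix u assume u: "u \<in> Red A"
      have "\<forall>i. scons u \<sigma> i \<in> Red (shift_env \<Gamma> A i)"
        using s u by (auto simp: scons_def shift_env_def split: nat.split)
      then have "psubst (scons u \<sigma>) t \<in> Red B" using tlam.IH by blast
      then show "subst (psubst (up \<sigma>) t) 0 u \<in> Red B" by (simp add: psubst_subst)
    qed
    then have "Lam (psubst (up \<sigma>) t) \<in> Red (Fun A B)" by (rule Red_Lam)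
    then show "psubst \<sigma> (Lam t) \<in> Red (Fun A B)" by simp
  qed
next
  case (tapp \<Gamma> t A B u r C)
  show ?case
  proof (intro allI impI)
    fix \<sigma> assume s: "\<forall>i. \<sigma> i \<in> Red (\<Gamma> i)"
    have t: "psubst \<sigma> t \<in> Red (Fun A B)" using tapp.IH(1) s by blast
    have u: "psubst \<sigma> u \<in> Red A" using tapp.IH(2) s by blast
    have r: "\<forall>v\<in>Red B. subst (psubst (up \<sigma>) r) 0 v \<in> Red C"
    proof
      fix v assume v: "v \<in> Red B"
      have "\<forall>i. scons v \<sigma> i \<in> Red (shift_env \<Gamma> B i)"
        using s v by (auto simp: scons_def shift_env_def split: nat.split)
      then have "psubst (scons v \<sigma>) r \<in> Red C" using tapp.IH(3) by blast
      then show "subst (psubst (up \<sigma>) r) 0 v \<in> Red C" by (simp add: psubst_subst)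
    qed
    show "psubst \<sigma> (JApp t u r) \<in> Red C" using Red_JApp[OF t u r] by simp
  qed
qed

theorem mainTheorem1:
  assumes "typing \<Gamma> t A"
  shows "SN_dbeta t"
proof -
  have "psubst Var t \<in> Red A" using fundamental[OF assms] by simp
  then have "t \<in> Red A" by (simp add: psubst_Var)
  then show ?thesis by (intro sn_SN Red_sn)
qed

end
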